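(* Let $\theta>0$, $\beta>0$ and let $m\ge1$ be an integer. Then the function $s\mapsto\log\mathcal L_{\mathsf P}(-s)=\log\mathbb E[e^{s\mathsf P}]$, for $s<0$, satisfies $$\frac{\partial^m}{\partial s^m}\log\mathcal L_{\mathsf P}(-s)\Big|_{s=-\frac1{\theta\beta}}=\frac2\alpha\lambda\pi(\theta\beta)^{m-\frac2\alpha}\,\mathbb E\Big[\mathsf g^{\frac2\alpha}\,\Gamma\Big(m-\tfrac2\alpha,\;\tfrac{\mathsf g}{\theta\beta}\max\{D^{-\alpha},\tfrac T{\mathsf g}\}\Big)\Big].$$
   Context: $\Phi=\{\mathsf x_i\}$ is a homogeneous Poisson point process on $\mathbb R^2$ with density $\lambda>0$, with i.i.d. marks $\mathsf g_i\ge0$ independent of $\Phi$ having a density, $\mathbb E[\mathsf g]=1$, $\mathbb E[\mathsf g^2]<\infty$. Fix $\alpha>2$, $D>0$, $T\ge0$; $\mathcal C=b(o,D)$ is the disk of radius $D$ centered at the origin. The useful power is $\mathsf P=\sum_{\mathsf x_i\in\Phi\cap\mathcal C}\mathsf g_i\|\mathsf x_i\|^{-\alpha}\mathbf 1(\mathsf g_i\|\mathsf x_i\|^{-\alpha}\ge T)$ and $\mathcal L_{\mathsf P}(s)=\mathbb E[e^{-s\mathsf P}]$. $\Gamma(a,x)=\int_x^\infty t^{a-1}e^{-t}dt$ (for $a\le 0$ it is defined for $x>0$ by the same integral). Convention for $T=0$: $T/\mathsf g=0$. *)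

theory Defs
  imports "HOL-Probability.Probability"
begin

definition disk_unif :: "real \<Rightarrow> (real^2) measure" where
  "disk_unif D = uniform_measure lborel (ball (0::real^2) D)"

text \<open>Probability space of the marked PPP restricted to C: a Poisson(lambda pi D^2) number
  of points, the i-th point being (x_i, g_i) with x_i uniform on C and g_i with law Gm,
  all independent (product measure).\<close>
definition ppp_space :: "real \<Rightarrow> real \<Rightarrow> real measure \<Rightarrow> (nat \<times> (nat \<Rightarrow> (real^2) \<times> real)) measure" where
  "ppp_space lam D Gm =
     measure_pmf (poisson_pmf (lam * pi * D\<^sup>2)) \<Otimes>\<^sub>M (\<Pi>\<^sub>M i\<in>UNIV. disk_unif D \<Otimes>\<^sub>M Gm)"

definition useful_power :: "real \<Rightarrow> real \<Rightarrow> nat \<times> (nat \<Rightarrow> (real^2) \<times> real) \<Rightarrow> real" where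
  "useful_power \<alpha> T \<omega> =
     (\<Sum>i<fst \<omega>. let x = fst (snd \<omega> i); g = snd (snd \<omega> i); v = g * norm x powr (-\<alpha>)
                  in v * (if v \<ge> T then 1 else 0))"

definition laplace_P :: "real \<Rightarrow> real \<Rightarrow> real \<Rightarrow> real \<Rightarrow> real measure \<Rightarrow> real \<Rightarrow> real" where
  "laplace_P lam \<alpha> D T Gm s =
     (\<integral>\<omega>. exp (- s * useful_power \<alpha> T \<omega>) \<partial>ppp_space lam D Gm)"

definition upper_Gamma :: "real \<Rightarrow> real \<Rightarrow> real" where
  "upper_Gamma a x = (LINT t:{x..}|lborel. t powr (a - 1) * exp (- t))"

end

theory Submission
  imports Defs "HOL-Real_Asymp.Real_Asymp"
begin

definition vfun :: "real \<Rightarrow> real \<Rightarrow> (real^2) \<times> real \<Rightarrow> real" where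
 "vfun \<alpha> T p = (let v = snd p * norm (fst p) powr (-\<alpha>) in v * (if v \<ge> T then 1 else 0))"

lemma useful_power_eq: "useful_power \<alpha> T \<omega> = (\<Sum>i<fst \<omega>. vfun \<alpha> T (snd \<omega> i))"
  by (simp add: useful_power_def vfun_def Let_def)

lemma vfun_nonneg: "T \<ge> 0 \<Longrightarrow> vfun \<alpha> T p \<ge> 0"
  by (auto simp: vfun_def Let_def)

lemma vfun_meas: "vfun \<alpha> T \<in> borel_measurable (borel \<Otimes>\<^sub>M borel)"
  unfolding vfun_def Let_def by measurable

lemma sets_disk[simp]: "sets (disk_unif D) = sets borel"
  by (simp add: disk_unif_def)

lemma prob_disk: "D > 0 \<Longrightarrow> prob_space (disk_unif D)"
  unfolding disk_unif_def
  by (rule prob_space_uniform_measure) (auto simp: emeasure_ball unit_ball_vol_2)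

lemma PiM_prod_nn:
  fixes M :: "'a measure" and h :: "'a \<Rightarrow> real"
  assumes M: "prob_space M" and h[measurable]: "h \<in> borel_measurable M"
  shows "(\<integral>\<^sup>+\<omega>. (\<Prod>i<n. ennreal (h (\<omega> i))) \<partial>(\<Pi>\<^sub>M i\<in>(UNIV::nat set). M))
       = (\<integral>\<^sup>+x. ennreal (h x) \<partial>M) ^ n"
proof -
  interpret product_prob_space "\<lambda>_::nat. M" UNIV
    by (simp add: M product_prob_space_def product_prob_space_axioms_def product_sigma_finite_def
         prob_space_imp_sigma_finite)
  have "(\<integral>\<^sup>+\<omega>. (\<Prod>i<n. ennreal (h (\<omega> i))) \<partial>(\<Pi>\<^sub>M i\<in>(UNIV::nat set). M))
      = (\<integral>\<^sup>+\<omega>. (\<Prod>i<n. ennreal (h (restrict \<omega> {..<n} i))) \<partial>(\<Pi>\<^sub>M i\<in>(UNIV::nat set). M))"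
    by (intro nn_integral_cong prod.cong) auto
  also have "\<dots> = (\<integral>\<^sup>+x. (\<Prod>i<n. ennreal (h (x i))) \<partial>distr (\<Pi>\<^sub>M i\<in>(UNIV::nat set). M) (\<Pi>\<^sub>M i\<in>{..<n}. M) (\<lambda>x. restrict x {..<n}))"
    by (subst nn_integral_distr) (auto intro!: measurable_restrict_subset)
  also have "\<dots> = (\<integral>\<^sup>+x. (\<Prod>i<n. ennreal (h (x i))) \<partial>(\<Pi>\<^sub>M i\<in>{..<n}. M))"
    by (subst distr_PiM_restrict_finite) auto
  also have "\<dots> = (\<Prod>i<n. (\<integral>\<^sup>+x. ennreal (h x) \<partial>M))"
    by (subst product_nn_integral_prod) auto
  finally show ?thesis by simp
qed

lemma laplace_eq:
  fixes lam \<alpha> D T s :: real and Gm :: "real measure"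
  assumes lam: "lam > 0" and D: "D > 0" and T: "T \<ge> 0" and s: "s \<le> 0"
    and Gm: "prob_space Gm" and sGm: "sets Gm = sets borel"
  shows "laplace_P lam \<alpha> D T Gm (- s)
     = exp (lam * pi * D\<^sup>2 * ((\<integral>p. exp (s * vfun \<alpha> T p) \<partial>(disk_unif D \<Otimes>\<^sub>M Gm)) - 1))"
proof -
  define \<mu> where "\<mu> = disk_unif D \<Otimes>\<^sub>M Gm"
  define \<Lambda> where "\<Lambda> = lam * pi * D\<^sup>2"
  have \<Lambda>: "\<Lambda> > 0" using lam D by (simp add: \<Lambda>_def)
  interpret \<mu>: prob_space \<mu> unfolding \<mu>_def
    by (intro prob_space_pair prob_disk D Gm)
  have sets_\<mu>: "sets \<mu> = sets (borel \<Otimes>\<^sub>M borel)"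
    unfolding \<mu>_def by (intro sets_pair_measure_cong) (auto simp: sGm)
  have vm[measurable]: "vfun \<alpha> T \<in> borel_measurable \<mu>"
    using vfun_meas measurable_cong_sets[OF sets_\<mu> refl] by blast
  define h where "h p = exp (s * vfun \<alpha> T p)" for p
  have hm[measurable]: "h \<in> borel_measurable \<mu>" unfolding h_def by measurable
  have h01: "0 \<le> h p" "h p \<le> 1" for p
    using vfun_nonneg[OF T, of \<alpha> p] s by (auto simp: h_def mult_nonpos_nonneg)
  define \<phi> where "\<phi> = (\<integral>p. h p \<partial>\<mu>)"
  have hint: "integrable \<mu> h"
    by (rule \<mu>.integrable_const_bound[where B=1]) (use h01 in auto)
  have nnh: "(\<integral>\<^sup>+p. ennreal (h p) \<partial>\<mu>) = ennreal \<phi>"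
    unfolding \<phi>_def by (rule nn_integral_eq_integral[OF hint]) (use h01 in auto)
  have \<phi>0: "\<phi> \<ge> 0" unfolding \<phi>_def using h01 by (simp add: integral_nonneg)
  define PP where "PP = (\<Pi>\<^sub>M i\<in>(UNIV::nat set). \<mu>)"
  interpret PP: prob_space PP unfolding PP_def
    by (intro prob_space_PiM \<mu>.prob_space_axioms)
  have ppp: "ppp_space lam D Gm = measure_pmf (poisson_pmf \<Lambda>) \<Otimes>\<^sub>M PP"
    by (simp add: ppp_space_def PP_def \<mu>_def \<Lambda>_def)
  have sets_ppp: "sets (measure_pmf (poisson_pmf \<Lambda>) \<Otimes>\<^sub>M PP) = sets (count_space UNIV \<Otimes>\<^sub>M PP)"
    by (intro sets_pair_measure_cong) auto
  define F where "F q = exp (s * useful_power \<alpha> T q)" for q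
  have Fm: "F \<in> borel_measurable (measure_pmf (poisson_pmf \<Lambda>) \<Otimes>\<^sub>M PP)"
    unfolding measurable_cong_sets[OF sets_ppp refl]
  proof (rule measurable_pair_measure_countable1)
    fix n :: nat
    show "(\<lambda>\<omega>. F (n, \<omega>)) \<in> borel_measurable PP"
      unfolding F_def useful_power_eq PP_def fst_conv snd_conv by measurable
  qed simp
  have inner: "(\<integral>\<^sup>+\<omega>. ennreal (F (n, \<omega>)) \<partial>PP) = ennreal (\<phi> ^ n)" for n
  proof -
    have "(\<integral>\<^sup>+\<omega>. ennreal (F (n, \<omega>)) \<partial>PP) = (\<integral>\<^sup>+\<omega>. (\<Prod>i<n. ennreal (h (\<omega> i))) \<partial>PP)"
      by (intro nn_integral_cong)
        (simp add: F_def h_def useful_power_eq sum_distrib_left exp_sum prod_ennreal)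
    also have "\<dots> = ennreal \<phi> ^ n"
      unfolding PP_def by (subst PiM_prod_nn) (auto simp: nnh \<mu>.prob_space_axioms)
    finally show ?thesis by (simp add: ennreal_power \<phi>0)
  qed
  have sumeq: "(\<lambda>n. \<Lambda> ^ n / fact n * exp (- \<Lambda>) * \<phi> ^ n) sums (exp (- \<Lambda>) * exp (\<Lambda> * \<phi>))"
  proof -
    have "(\<lambda>n. (\<Lambda> * \<phi>) ^ n /\<^sub>R fact n) sums exp (\<Lambda> * \<phi>)" by (rule exp_converges)
    then have "(\<lambda>n. exp (- \<Lambda>) * ((\<Lambda> * \<phi>) ^ n /\<^sub>R fact n)) sums (exp (- \<Lambda>) * exp (\<Lambda> * \<phi>))"
      by (rule sums_mult)
    then show ?thesis by (simp add: power_mult_distrib field_simps)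
  qed
  have "laplace_P lam \<alpha> D T Gm (- s) = (\<integral>q. F q \<partial>(measure_pmf (poisson_pmf \<Lambda>) \<Otimes>\<^sub>M PP))"
    by (simp add: laplace_P_def ppp F_def)
  also have "\<dots> = enn2real (\<integral>\<^sup>+q. ennreal (F q) \<partial>(measure_pmf (poisson_pmf \<Lambda>) \<Otimes>\<^sub>M PP))"
    by (rule integral_eq_nn_integral[OF Fm]) (simp add: F_def)
  also have "(\<integral>\<^sup>+q. ennreal (F q) \<partial>(measure_pmf (poisson_pmf \<Lambda>) \<Otimes>\<^sub>M PP))
      = (\<integral>\<^sup>+n. \<integral>\<^sup>+\<omega>. ennreal (F (n, \<omega>)) \<partial>PP \<partial>measure_pmf (poisson_pmf \<Lambda>))"
    by (rule PP.nn_integral_fst[symmetric]) (use Fm in measurable)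
  also have "\<dots> = (\<integral>\<^sup>+n. ennreal (\<phi> ^ n) \<partial>measure_pmf (poisson_pmf \<Lambda>))"
    by (simp add: inner)
  also have "\<dots> = (\<Sum>n. ennreal (\<Lambda> ^ n / fact n * exp (- \<Lambda>) * \<phi> ^ n))"
    using \<Lambda> \<phi>0 by (simp add: nn_integral_measure_pmf nn_integral_count_space_nat ennreal_mult''[symmetric] mult_ac)
  also have "\<dots> = ennreal (exp (- \<Lambda>) * exp (\<Lambda> * \<phi>))"
    using sumeq \<Lambda> \<phi>0 by (subst suminf_ennreal2) (auto simp: sums_iff sums_unique)
  finally have "laplace_P lam \<alpha> D T Gm (- s) = exp (- \<Lambda>) * exp (\<Lambda> * \<phi>)" by simp
  also have "\<dots> = exp (\<Lambda> * (\<phi> - 1))" by (simp add: mult_exp_exp algebra_simps)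
  finally show ?thesis by (simp add: \<Lambda>_def \<phi>_def h_def \<mu>_def)
qed

lemma deriv_integral:
  fixes M :: "'a measure" and F F' :: "real \<Rightarrow> 'a \<Rightarrow> real"
  assumes fin: "finite_measure M" and r: "r > 0"
  and Fint: "\<And>s. s \<in> ball s0 r \<Longrightarrow> integrable M (F s)"
  and F'm: "F' s0 \<in> borel_measurable M"
  and D: "\<And>s x. s \<in> ball s0 r \<Longrightarrow> x \<in> space M \<Longrightarrow> ((\<lambda>s. F s x) has_real_derivative F' s x) (at s)"
  and B: "\<And>s x. s \<in> ball s0 r \<Longrightarrow> x \<in> space M \<Longrightarrow> \<bar>F' s x\<bar> \<le> C"
  shows "((\<lambda>s. \<integral>x. F s x \<partial>M) has_real_derivative (\<integral>x. F' s0 x \<partial>M)) (at s0)"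
  unfolding has_field_derivative_iff tendsto_at_iff_sequentially
proof (intro allI impI)
  interpret finite_measure M by (rule fin)
  fix X :: "nat \<Rightarrow> real" assume Xne: "\<forall>i. X i \<in> UNIV - {s0}" and X: "X \<longlonglongrightarrow> s0"
  have "\<forall>\<^sub>F n in sequentially. dist (X n) s0 < r" using X r by (rule tendstoD)
  then obtain N where N: "\<And>n. n \<ge> N \<Longrightarrow> X n \<in> ball s0 r"
    by (auto simp: eventually_sequentially dist_commute)
  have s0b: "s0 \<in> ball s0 r" using r by simp
  define q where "q n x = (F (X (n + N)) x - F s0 x) / (X (n + N) - s0)" for n x
  have qint: "integrable M (q n)" for n
    unfolding q_def using N[of "n+N"] s0b by (intro integrable_divide Bochner_Integration.integrable_diff Fint) simp_all
  have bound: "norm (q n x) \<le> C" if x: "x \<in> space M" for n x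
  proof -
    have Xb: "X (n+N) \<in> ball s0 r" using N by simp
    have ne: "X (n+N) \<noteq> s0" using Xne by auto
    have "norm (F (X (n+N)) x - F s0 x) \<le> C * norm (X (n+N) - s0)"
    proof (rule field_differentiable_bound[where S="ball s0 r" and f="\<lambda>s. F s x" and f'="\<lambda>s. F' s x"])
      show "convex (ball s0 r)" by simp
      show "((\<lambda>s. F s x) has_field_derivative F' z x) (at z within ball s0 r)" if "z \<in> ball s0 r" for z
        by (rule has_field_derivative_at_within[OF D[OF that x]])
      show "norm (F' z x) \<le> C" if "z \<in> ball s0 r" for z
        using B[OF that x] by (simp only: real_norm_def)
      show "X (n+N) \<in> ball s0 r" by (fact Xb)
      show "s0 \<in> ball s0 r" by (fact s0b)
    qed
    then have "\<bar>F (X (n+N)) x - F s0 x\<bar> \<le> C * \<bar>X (n+N) - s0\<bar>" by simp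
    moreover have "\<bar>X (n+N) - s0\<bar> > 0" using ne by simp
    ultimately show ?thesis unfolding q_def by (simp add: abs_divide pos_divide_le_eq)
  qed
  have lim: "(\<lambda>n. q n x) \<longlonglongrightarrow> F' s0 x" if x: "x \<in> space M" for x
  proof -
    have "((\<lambda>y. (F y x - F s0 x) / (y - s0)) \<longlongrightarrow> F' s0 x) (at s0)"
      using D[OF s0b x] by (simp add: has_field_derivative_iff)
    then have A: "\<forall>X. (\<forall>i. X i \<in> UNIV - {s0}) \<longrightarrow> X \<longlonglongrightarrow> s0 \<longrightarrow> ((\<lambda>y. (F y x - F s0 x) / (y - s0)) \<circ> X) \<longlonglongrightarrow> F' s0 x"
      unfolding tendsto_at_iff_sequentially .
    have "(\<lambda>n. X (n + N)) \<longlonglongrightarrow> s0" using X by (rule LIMSEQ_ignore_initial_segment)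
    moreover have "\<forall>i. X (i + N) \<in> UNIV - {s0}" using Xne by auto
    ultimately have "((\<lambda>y. (F y x - F s0 x) / (y - s0)) \<circ> (\<lambda>n. X (n + N))) \<longlonglongrightarrow> F' s0 x"
      using spec[OF A, of "\<lambda>n. X (n + N)"] by (simp only: simp_thms imp_conjL)
    then show ?thesis unfolding q_def comp_def .
  qed
  have "(\<lambda>n. \<integral>x. q n x \<partial>M) \<longlonglongrightarrow> (\<integral>x. F' s0 x \<partial>M)"
  proof (rule integral_dominated_convergence[where w="\<lambda>_. C"])
    show "F' s0 \<in> borel_measurable M" by (rule F'm)
    show "q i \<in> borel_measurable M" for i using qint[of i] by auto
    show "integrable M (\<lambda>_. C)" by simp
    show "AE x in M. (\<lambda>i. q i x) \<longlonglongrightarrow> F' s0 x" using lim by auto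
    show "AE x in M. norm (q i x) \<le> C" for i using bound by auto
  qed
  moreover have "(\<integral>x. q n x \<partial>M) = ((\<lambda>y. ((\<integral>x. F y x \<partial>M) - (\<integral>x. F s0 x \<partial>M)) / (y - s0)) \<circ> X) (n + N)" for n
  proof -
    have i1: "integrable M (F (X (n+N)))" using N[of "n+N"] by (intro Fint) simp
    have i2: "integrable M (F s0)" using s0b by (intro Fint)
    show ?thesis unfolding comp_def q_def
      by (simp only: integral_divide_zero Bochner_Integration.integral_diff[OF i1 i2])
  qed
  ultimately have "(\<lambda>n. ((\<lambda>y. ((\<integral>x. F y x \<partial>M) - (\<integral>x. F s0 x \<partial>M)) / (y - s0)) \<circ> X) (n + N)) \<longlonglongrightarrow> (\<integral>x. F' s0 x \<partial>M)"
    by (simp only:)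
  then show "((\<lambda>y. ((\<integral>x. F y x \<partial>M) - (\<integral>x. F s0 x \<partial>M)) / (y - s0)) \<circ> X) \<longlonglongrightarrow> (\<integral>x. F' s0 x \<partial>M)"
    by (rule LIMSEQ_offset)
qed

lemma iter_deriv:
  fixes f :: "real \<Rightarrow> real" and h :: "nat \<Rightarrow> real \<Rightarrow> real"
  assumes S: "open S"
    and hd: "\<And>k s. s \<in> S \<Longrightarrow> (h k has_real_derivative h (Suc k) s) (at s)"
    and f: "\<And>s. s \<in> S \<Longrightarrow> f s = h 0 s"
  shows "s \<in> S \<Longrightarrow> (deriv ^^ k) f s = h k s"
proof (induction k arbitrary: s)
  case 0 then show ?case using f by simp
next
  case (Suc k)
  have "((deriv ^^ k) f has_real_derivative h (Suc k) s) (at s)"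
    by (rule has_field_derivative_transform_within_open[OF hd[OF Suc.prems] S Suc.prems]) (simp add: Suc.IH)
  then show ?case by (simp add: DERIV_imp_deriv)
qed

lemma pow_exp_bound:
  fixes a y :: real assumes a: "a > 0" and y: "y \<ge> 0"
  shows "y ^ n * exp (- a * y) \<le> fact n / a ^ n"
proof -
  have "(a*y) ^ n / fact n \<le> exp (a*y)"
  proof -
    have "(\<lambda>n. (a*y)^n /\<^sub>R fact n) sums exp (a*y)" by (rule exp_converges)
    then have "sum (\<lambda>n. (a*y)^n /\<^sub>R fact n) {n} \<le> suminf (\<lambda>n. (a*y)^n /\<^sub>R fact n)"
      using a y by (intro sum_le_suminf) (auto simp: sums_iff)
    also have "\<dots> = exp (a*y)" using \<open>_ sums _\<close> by (simp add: sums_iff)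
    finally have "sum (\<lambda>n. (a*y)^n /\<^sub>R fact n) {n} \<le> exp (a*y)" .
    then show ?thesis by (simp add: divide_inverse mult.commute)
  qed
  then have "a^n * y^n \<le> fact n * exp (a*y)"
    by (simp add: power_mult_distrib divide_le_eq mult.commute)
  then have "y^n \<le> fact n / a^n * exp (a * y)" using a by (simp add: field_simps)
  then have "y^n * exp (- a * y) \<le> fact n / a^n * exp (a * y) * exp (- a * y)"
    by (rule mult_right_mono) simp
  also have "\<dots> = fact n / a ^ n" by (simp add: mult.assoc exp_minus[symmetric] mult_exp_exp)
  finally show ?thesis .
qed

lemma psi_deriv:
  fixes M :: "((real^2) \<times> real) measure" and v :: "(real^2) \<times> real \<Rightarrow> real"
  assumes M: "prob_space M" and vm: "v \<in> borel_measurable M" and v0: "\<And>p. v p \<ge> 0" and s: "s < 0"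
  shows "((\<lambda>s. \<integral>p. v p ^ k * exp (s * v p) \<partial>M) has_real_derivative
          (\<integral>p. v p ^ Suc k * exp (s * v p) \<partial>M)) (at s)"
proof -
  interpret prob_space M by (rule M)
  define a where "a = - s / 2"
  have a: "a > 0" using s by (simp add: a_def)
  have bnd: "\<bar>v p ^ n * exp (t * v p)\<bar> \<le> fact n / a ^ n" if t: "t \<in> ball s (-s/2)" for t p n
  proof -
    have "t \<le> - a" using t by (auto simp: a_def dist_real_def abs_if split: if_splits)
    then have "exp (t * v p) \<le> exp (- a * v p)" using v0[of p] by (intro exp_mono mult_right_mono) auto
    then have "v p ^ n * exp (t * v p) \<le> v p ^ n * exp (- a * v p)"
      using v0[of p] by (intro mult_left_mono) auto
    also have "\<dots> \<le> fact n / a ^ n" by (rule pow_exp_bound[OF a v0])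
    finally show ?thesis using v0[of p] by simp
  qed
  show ?thesis
  proof (rule deriv_integral[where r="-s/2" and C="fact (Suc k) / a ^ Suc k"])
    show "finite_measure M" by (rule finite_measure_axioms)
    show "0 < - s / 2" using s by simp
    show "integrable M (\<lambda>p. v p ^ k * exp (t * v p))" if "t \<in> ball s (- s / 2)" for t
      by (rule integrable_const_bound[where B="fact k / a ^ k"]) (use bnd[OF that] vm in auto)
    show "(\<lambda>p. v p ^ Suc k * exp (s * v p)) \<in> borel_measurable M" using vm by measurable
    show "((\<lambda>s. v p ^ k * exp (s * v p)) has_real_derivative v p ^ Suc k * exp (t * v p)) (at t)" for t p
      by (auto intro!: derivative_eq_intros simp: algebra_simps)
    show "\<bar>v p ^ Suc k * exp (t * v p)\<bar> \<le> fact (Suc k) / a ^ Suc k" if "t \<in> ball s (- s / 2)" for t p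
      by (rule bnd[OF that])
  qed
qed

lemma stepB:
  fixes lam \<alpha> D T s0 :: real and Gm :: "real measure" and m :: nat
  assumes lam: "lam > 0" and D: "D > 0" and T: "T \<ge> 0" and s0: "s0 < 0" and m: "m \<ge> 1"
    and Gm: "prob_space Gm" and sGm: "sets Gm = sets borel"
  shows "(deriv ^^ m) (\<lambda>s. ln (laplace_P lam \<alpha> D T Gm (- s))) s0
     = lam * pi * D\<^sup>2 * (\<integral>p. vfun \<alpha> T p ^ m * exp (s0 * vfun \<alpha> T p) \<partial>(disk_unif D \<Otimes>\<^sub>M Gm))"
proof -
  define \<mu> where "\<mu> = disk_unif D \<Otimes>\<^sub>M Gm"
  define \<Lambda> where "\<Lambda> = lam * pi * D\<^sup>2"
  have M: "prob_space \<mu>" unfolding \<mu>_def by (intro prob_space_pair prob_disk D Gm)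
  have sets_\<mu>: "sets \<mu> = sets (borel \<Otimes>\<^sub>M borel)"
    unfolding \<mu>_def by (intro sets_pair_measure_cong) (auto simp: sGm)
  have vm: "vfun \<alpha> T \<in> borel_measurable \<mu>"
    using vfun_meas measurable_cong_sets[OF sets_\<mu> refl] by blast
  define \<psi> where "\<psi> k s = (\<integral>p. vfun \<alpha> T p ^ k * exp (s * vfun \<alpha> T p) \<partial>\<mu>)" for k s
  define h where "h k s = (if k = 0 then \<Lambda> * (\<psi> 0 s - 1) else \<Lambda> * \<psi> k s)" for k s
  have hd: "(h k has_real_derivative h (Suc k) s) (at s)" if "s \<in> {s. s < 0}" for k s
  proof -
    have "(\<psi> k has_real_derivative \<psi> (Suc k) s) (at s)"
      unfolding \<psi>_def using that by (intro psi_deriv M vm vfun_nonneg T) auto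
    then show ?thesis unfolding h_def
      by (cases "k = 0") (auto intro!: derivative_eq_intros)
  qed
  have f: "ln (laplace_P lam \<alpha> D T Gm (- s)) = h 0 s" if "s \<in> {s. s < 0}" for s
    using that by (simp add: laplace_eq[OF lam D T _ Gm sGm] h_def \<psi>_def \<Lambda>_def \<mu>_def)
  have "(deriv ^^ m) (\<lambda>s. ln (laplace_P lam \<alpha> D T Gm (- s))) s0 = h m s0"
    by (rule iter_deriv[where S="{s. s < 0}"]) (use hd f s0 in \<open>auto simp: open_Collect_less\<close>)
  then show ?thesis using m by (simp add: h_def \<psi>_def \<Lambda>_def \<mu>_def)
qed

lemma nn_int_2r:
  fixes a D :: real assumes a: "0 \<le> a" and D: "D > 0"
  shows "(\<integral>\<^sup>+r. ennreal (indicator {0..a} r * (2*r/D\<^sup>2)) \<partial>lborel) = ennreal (a\<^sup>2/D\<^sup>2)"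
proof -
  have int: "integrable lborel (\<lambda>r. indicator {0..a} r *\<^sub>R (2*r/D\<^sup>2))"
  proof -
    have "continuous_on {0..a} (\<lambda>r. 2*r/D\<^sup>2)" using D by (auto intro!: continuous_intros)
    from borel_integrable_atLeastAtMost'[OF this] show ?thesis unfolding set_integrable_def .
  qed
  have "(\<integral>\<^sup>+r. ennreal (indicator {0..a} r * (2*r/D\<^sup>2)) \<partial>lborel)
      = ennreal (\<integral>r. indicator {0..a} r *\<^sub>R (2*r/D\<^sup>2) \<partial>lborel)"
    using int by (subst nn_integral_eq_integral) (auto simp: indicator_def)
  also have "(\<integral>r. indicator {0..a} r *\<^sub>R (2*r/D\<^sup>2) \<partial>lborel) = a\<^sup>2/D\<^sup>2 - 0\<^sup>2/D\<^sup>2"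
  proof (rule integral_FTC_atLeastAtMost[OF a])
    show "((\<lambda>r. r\<^sup>2/D\<^sup>2) has_vector_derivative 2*x/D\<^sup>2) (at x within {0..a})" for x
      using D by (auto intro!: derivative_eq_intros simp: has_real_derivative_iff_has_vector_derivative[symmetric] power2_eq_square)
    show "continuous_on {0..a} (\<lambda>x. 2 * x / D\<^sup>2)" using D by (auto intro!: continuous_intros)
  qed
  finally show ?thesis by simp
qed

lemma disk_norm_distr:
  fixes D :: real assumes D: "D > 0"
  shows "distr (disk_unif D) borel norm = density lborel (\<lambda>r. ennreal (indicator {0..D} r * (2*r/D\<^sup>2)))"
    (is "?L = ?R")
proof -
  interpret P: prob_space "disk_unif D" by (rule prob_disk[OF D])
  have sigma: "sets ?R = sets borel" by simp
  have eR: "emeasure ?R {..x} = ennreal ((min (max x 0) D)\<^sup>2/D\<^sup>2)" for x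
  proof -
    have "emeasure ?R {..x} = (\<integral>\<^sup>+r. ennreal (indicator {0..D} r * (2*r/D\<^sup>2)) * indicator {..x} r \<partial>lborel)"
      by (subst emeasure_density) auto
    also have "\<dots> = (\<integral>\<^sup>+r. ennreal (indicator {0..min (max x 0) D} r * (2*r/D\<^sup>2)) \<partial>lborel)"
    proof (intro nn_integral_cong_AE)
      show "AE r in lborel. ennreal (indicator {0..D} r * (2*r/D\<^sup>2)) * indicator {..x} r
              = ennreal (indicator {0..min (max x 0) D} r * (2*r/D\<^sup>2))"
        using AE_lborel_singleton[of 0]
        by eventually_elim (auto simp: indicator_def min_def max_def)
    qed
    also have "\<dots> = ennreal ((min (max x 0) D)\<^sup>2/D\<^sup>2)"
      using D by (intro nn_int_2r) auto
    finally show ?thesis .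
  qed
  have eL: "emeasure ?L {..x} = ennreal ((min (max x 0) D)\<^sup>2/D\<^sup>2)" for x
  proof -
    have "emeasure ?L {..x} = emeasure (disk_unif D) {y. norm y \<le> x}"
      by (subst emeasure_distr) (auto simp: disk_unif_def vimage_def)
    also have "\<dots> = emeasure lborel (ball (0::real^2) D \<inter> {y. norm y \<le> x}) / emeasure lborel (ball (0::real^2) D)"
      unfolding disk_unif_def by (subst emeasure_uniform_measure) auto
    also have "emeasure lborel (ball (0::real^2) D \<inter> {y. norm y \<le> x}) = ennreal (pi * (min (max x 0) D)\<^sup>2)"
    proof (cases "x < 0")
      case True
      then have "ball (0::real^2) D \<inter> {y. norm y \<le> x} = {}" using norm_ge_zero by (auto simp del: norm_ge_zero) (smt (verit) norm_ge_zero)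
      then show ?thesis using True D by simp
    next
      case False
      show ?thesis
      proof (cases "x < D")
        case True
        then have "ball (0::real^2) D \<inter> {y. norm y \<le> x} = cball 0 x" by (auto simp: dist_norm)
        then show ?thesis using True False by (simp add: emeasure_cball unit_ball_vol_2)
      next
        case F2: False
        then have "ball (0::real^2) D \<inter> {y. norm y \<le> x} = ball 0 D" by (auto simp: dist_norm)
        then show ?thesis using F2 False D by (simp add: emeasure_ball unit_ball_vol_2)
      qed
    qed
    also have "emeasure lborel (ball (0::real^2) D) = ennreal (pi * D\<^sup>2)"
      using D by (simp add: emeasure_ball unit_ball_vol_2)
    finally show ?thesis using D
      by (simp add: divide_ennreal)
  qed
  have nm: "norm \<in> borel_measurable (disk_unif D)"
    unfolding measurable_cong_sets[OF sets_disk refl] by simp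
  have RL: "real_distribution ?L"
    by (auto intro!: real_distribution.intro P.prob_space_distr nm simp: real_distribution_axioms_def)
  have RR: "real_distribution ?R"
  proof -
    have "prob_space ?R"
    proof (rule prob_spaceI)
      have "emeasure ?R (space ?R) = (\<integral>\<^sup>+r. ennreal (indicator {0..D} r * (2*r/D\<^sup>2)) \<partial>lborel)"
        by (subst emeasure_density) auto
      also have "\<dots> = 1" using D by (subst nn_int_2r) auto
      finally show "emeasure ?R (space ?R) = 1" .
    qed
    then show ?thesis by (auto intro!: real_distribution.intro simp: real_distribution_axioms_def)
  qed
  show ?thesis
  proof (rule cdf_unique[OF RL RR])
    show "cdf ?L = cdf ?R"
    proof
      fix x
      have "measure ?L {..x} = measure ?R {..x}"
        unfolding measure_def using eL eR by simp
      then show "cdf ?L x = cdf ?R x" by (simp add: cdf_def)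
    qed
  qed
qed

lemma key_identity:
  fixes g0 c \<alpha> r :: real and m :: nat
  assumes g0: "g0 > 0" and c: "c > 0" and \<alpha>: "\<alpha> > 2" and r: "r > 0"
  shows "((g0/c) * r powr -\<alpha>) powr (real m - 2/\<alpha> - 1) * exp (- ((g0/c) * r powr -\<alpha>)) * ((g0/c) * \<alpha> * r powr (-\<alpha>-1))
       = \<alpha> * c powr (2/\<alpha> - real m) * g0 powr (-2/\<alpha>) * (r * (g0 * r powr -\<alpha>)^m * exp (-(g0 * r powr -\<alpha>)/c))"
proof -
  have e: "exp (- ((g0/c) * r powr -\<alpha>)) = exp (-(g0 * r powr -\<alpha>)/c)" by simp
  have pos1: "((g0/c) * r powr -\<alpha>) powr (real m - 2/\<alpha> - 1) * ((g0/c) * r powr (-\<alpha>-1)) > 0"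
    using g0 c r by simp
  have pos2: "c powr (2/\<alpha> - real m) * g0 powr (-2/\<alpha>) * (r * (g0 * r powr -\<alpha>)^m) > 0"
    using g0 c r by simp
  have "ln (((g0/c) * r powr -\<alpha>) powr (real m - 2/\<alpha> - 1) * ((g0/c) * r powr (-\<alpha>-1)))
      = ln (c powr (2/\<alpha> - real m) * g0 powr (-2/\<alpha>) * (r * (g0 * r powr -\<alpha>)^m))"
    using g0 c r \<alpha> by (simp add: ln_mult ln_div ln_realpow field_simps)
  then have "((g0/c) * r powr -\<alpha>) powr (real m - 2/\<alpha> - 1) * ((g0/c) * r powr (-\<alpha>-1))
      = c powr (2/\<alpha> - real m) * g0 powr (-2/\<alpha>) * (r * (g0 * r powr -\<alpha>)^m)"
    using pos1 pos2 by simp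
  then have "\<alpha> * exp (-(g0 * r powr -\<alpha>)/c) * (((g0/c) * r powr -\<alpha>) powr (real m - 2/\<alpha> - 1) * ((g0/c) * r powr (-\<alpha>-1)))
      = \<alpha> * exp (-(g0 * r powr -\<alpha>)/c) * (c powr (2/\<alpha> - real m) * g0 powr (-2/\<alpha>) * (r * (g0 * r powr -\<alpha>)^m))"
    by (simp only:)
  then show ?thesis unfolding e by (simp only: mult_ac)
qed

lemma lim_at_right0:
  fixes g0 c \<alpha> :: real assumes g0: "g0 > 0" and c: "c > 0" and \<alpha>: "\<alpha> > 2"
  shows "filterlim (\<lambda>r. - (g0/c) * r powr -\<alpha>) at_bot (at_right 0)"
proof -
  have "filterlim (\<lambda>r. r powr -\<alpha>) at_top (at_right 0)"
    using \<alpha> by real_asymp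
  then have "filterlim (\<lambda>r. (g0/c) * r powr -\<alpha>) at_top (at_right 0)"
    using g0 c by (intro filterlim_tendsto_pos_mult_at_top[OF tendsto_const]) auto
  then show ?thesis by (simp add: filterlim_uminus_at_bot)
qed

lemma subst_gamma:
  fixes g0 c \<alpha> K :: real and m :: nat
  assumes g0: "g0 > 0" and c: "c > 0" and \<alpha>: "\<alpha> > 2" and m: "m \<ge> 1" and K: "K > 0"
  shows "(LBINT r=0..K powr (-1/\<alpha>). r * (g0 * r powr -\<alpha>)^m * exp (-(g0 * r powr -\<alpha>)/c))
          = c powr (real m - 2/\<alpha>) * g0 powr (2/\<alpha>) / \<alpha> * upper_Gamma (real m - 2/\<alpha>) (g0/c*K)"
proof -
  define R0 where "R0 = K powr (-1/\<alpha>)"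
  define b where "b = g0/c*K"
  define a' where "a' = real m - 2/\<alpha>"
  define gs where "gs r = - (g0/c) * r powr -\<alpha>" for r
  define gs' where "gs' r = (g0/c) * \<alpha> * r powr (-\<alpha>-1)" for r
  define fs where "fs y = (-y) powr (a' - 1) * exp y" for y
  define Q where "Q r = r * (g0 * r powr -\<alpha>)^m * exp (-(g0 * r powr -\<alpha>)/c)" for r
  define \<kappa> where "\<kappa> = \<alpha> * c powr (2/\<alpha> - real m) * g0 powr (-2/\<alpha>)"
  have R0: "R0 > 0" using K by (simp add: R0_def)
  have b: "b > 0" using g0 c K by (simp add: b_def)
  have \<kappa>: "\<kappa> > 0" using \<alpha> c g0 by (simp add: \<kappa>_def)
  have gsR0: "gs R0 = - b"
    using K \<alpha> by (simp add: gs_def R0_def b_def powr_powr)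
  have ident: "fs (gs r) * gs' r = \<kappa> * Q r" if r: "r > 0" for r
    using key_identity[OF g0 c \<alpha> r, of m] by (simp add: fs_def gs_def gs'_def \<kappa>_def Q_def a'_def)
  have Qbnd: "\<bar>Q r\<bar> \<le> R0 * (fact m * c ^ m)" if r: "0 < r" "r < R0" for r
  proof -
    have w0: "g0 * r powr -\<alpha> \<ge> 0" using g0 by simp
    have "(g0 * r powr -\<alpha>)^m * exp (- (1/c) * (g0 * r powr -\<alpha>)) \<le> fact m / (1/c) ^ m"
      using c w0 by (intro pow_exp_bound) auto
    then have "(g0 * r powr -\<alpha>)^m * exp (-(g0 * r powr -\<alpha>)/c) \<le> fact m * c ^ m"
      by (simp add: power_one_over)
    moreover have "(g0 * r powr -\<alpha>)^m * exp (-(g0 * r powr -\<alpha>)/c) \<ge> 0" using w0 by simp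
    ultimately have "r * ((g0 * r powr -\<alpha>)^m * exp (-(g0 * r powr -\<alpha>)/c)) \<le> R0 * (fact m * c ^ m)"
      using r mult_mono[of r R0 "(g0 * r powr -\<alpha>)^m * exp (-(g0 * r powr -\<alpha>)/c)" "fact m * c ^ m"]
      by linarith
    moreover have "Q r = r * ((g0 * r powr -\<alpha>)^m * exp (-(g0 * r powr -\<alpha>)/c))"
      by (simp add: Q_def mult.assoc)
    moreover have "Q r \<ge> 0" using r w0 unfolding Q_def by simp
    ultimately show ?thesis by simp
  qed
  have int_fg: "set_integrable lborel (einterval 0 R0) (\<lambda>x. fs (gs x) * gs' x)"
    unfolding set_integrable_def
  proof (rule integrableI_bounded_set[where A="{0<..<R0}" and B="\<kappa> * (R0 * (fact m * c ^ m))"])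
    show "(\<lambda>x. indicat_real (einterval 0 (ereal R0)) x *\<^sub>R (fs (gs x) * gs' x)) \<in> borel_measurable lborel"
      unfolding fs_def gs_def gs'_def by measurable
    show "emeasure lborel {0<..<R0} < \<infinity>" using R0 by (simp add: emeasure_lborel_Ioo)
    show "AE x in lborel. x \<in> {0<..<R0} \<longrightarrow> norm (indicat_real (einterval 0 (ereal R0)) x *\<^sub>R (fs (gs x) * gs' x)) \<le> \<kappa> * (R0 * (fact m * c ^ m))"
      using Qbnd \<kappa> by (auto simp: ident abs_mult zero_ereal_def)
    show "AE x in lborel. x \<notin> {0<..<R0} \<longrightarrow> indicat_real (einterval 0 (ereal R0)) x *\<^sub>R (fs (gs x) * gs' x) = 0"
      by (auto simp: zero_ereal_def)
  qed simp
  have sub: "(LBINT y=-\<infinity>..ereal (-b). fs y) = (LBINT r=0..ereal R0. fs (gs r) * gs' r)"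
  proof (rule interval_integral_substitution_nonneg(2))
    show "0 < ereal R0" using R0 by simp
    show "DERIV gs x :> gs' x" if "0 < ereal x" "ereal x < ereal R0" for x
      using that c unfolding gs_def gs'_def
      by (auto intro!: derivative_eq_intros simp: zero_ereal_def)
    show "isCont fs (gs x)" if "0 < ereal x" "ereal x < ereal R0" for x
    proof -
      have "gs x < 0" using that g0 c by (simp add: gs_def zero_ereal_def)
      then show ?thesis unfolding fs_def by (auto intro!: continuous_intros)
    qed
    show "isCont gs' x" if "0 < ereal x" "ereal x < ereal R0" for x
      using that c unfolding gs'_def by (auto intro!: continuous_intros simp: zero_ereal_def)
    show "0 \<le> fs (gs x)" for x unfolding fs_def by simp
    show "0 \<le> gs' x" for x unfolding gs'_def using g0 c \<alpha> by simp
    show "((ereal \<circ> gs \<circ> real_of_ereal) \<longlongrightarrow> - \<infinity>) (at_right 0)"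
      unfolding zero_ereal_def ereal_tendsto_simps gs_def using lim_at_right0[OF g0 c \<alpha>] by simp
    show "((ereal \<circ> gs \<circ> real_of_ereal) \<longlongrightarrow> ereal (- b)) (at_left (ereal R0))"
    proof -
      have "isCont gs R0" using R0 c unfolding gs_def by (auto intro!: continuous_intros)
      then have "(gs \<longlongrightarrow> - b) (at_left R0)"
        unfolding isCont_def gsR0 by (rule Lim_at_imp_Lim_at_within)
      then show ?thesis unfolding ereal_tendsto_simps .
    qed
    show "set_integrable lborel (einterval 0 (ereal R0)) (\<lambda>x. fs (gs x) * gs' x)" by (rule int_fg)
  qed
  have rhs: "(LBINT r=0..ereal R0. fs (gs r) * gs' r) = \<kappa> * (LBINT r=0..ereal R0. Q r)"
  proof -
    have "(LBINT r=0..ereal R0. fs (gs r) * gs' r) = (LBINT r=0..ereal R0. \<kappa> * Q r)"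
      using R0 by (intro interval_integral_cong) (auto simp: ident zero_ereal_def einterval_def)
    then show ?thesis by simp
  qed
  have lhs: "(LBINT y=-\<infinity>..ereal (-b). fs y) = upper_Gamma a' b"
  proof -
    have "(LBINT y=-\<infinity>..ereal (-b). fs y) = (LBINT y=ereal b..\<infinity>. fs (- y))"
      by (subst interval_integral_reflect) simp
    also have "\<dots> = (LBINT y:{b<..}. fs (- y))"
      by (rule interval_integral_to_infinity_eq)
    also have "\<dots> = (LBINT y:{b..}. fs (- y))"
      by (rule set_integral_discrete_difference[where X="{b}"]) auto
    also have "\<dots> = upper_Gamma a' b"
      unfolding upper_Gamma_def fs_def by simp
    finally show ?thesis .
  qed
  have "upper_Gamma a' b = \<kappa> * (LBINT r=0..ereal R0. Q r)" using sub lhs rhs by simp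
  then have "(LBINT r=0..ereal R0. Q r) = upper_Gamma a' b / \<kappa>" using \<kappa> by simp
  also have "upper_Gamma a' b / \<kappa> = c powr (real m - 2/\<alpha>) * g0 powr (2/\<alpha>) / \<alpha> * upper_Gamma a' b"
  proof -
    have X: "c powr (2/\<alpha> - real m) = inverse (c powr (real m - 2/\<alpha>))"
      by (metis minus_diff_eq powr_minus)
    have Y: "g0 powr (-2/\<alpha>) = inverse (g0 powr (2/\<alpha>))"
      by (metis minus_divide_left powr_minus)
    show ?thesis unfolding \<kappa>_def X Y using \<alpha> c g0 by (simp add: field_simps)
  qed
  finally show ?thesis by (simp add: Q_def R0_def a'_def b_def)
qed

lemma inner_disk:
  fixes D T \<alpha> c g0 :: real and m :: nat
  assumes D: "D > 0" and T: "T \<ge> 0" and \<alpha>: "\<alpha> > 2" and m: "m \<ge> 1" and c: "c > 0" and g0: "g0 \<ge> 0"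
  shows "(\<integral>x. vfun \<alpha> T (x, g0) ^ m * exp (- 1 / c * vfun \<alpha> T (x, g0)) \<partial>disk_unif D)
       = 2 / D\<^sup>2 * (c powr (real m - 2/\<alpha>) * g0 powr (2/\<alpha>) / \<alpha>
           * upper_Gamma (real m - 2/\<alpha>) (g0 / c * max (D powr (-\<alpha>)) (T / g0)))"
proof (cases "g0 = 0")
  case True
  then show ?thesis using m by (simp add: vfun_def)
next
  case False
  then have g0: "g0 > 0" using g0 by simp
  define wv where "wv r = (let v = g0 * r powr (-\<alpha>) in v * (if v \<ge> T then 1 else 0))" for r
  define Hh where "Hh r = wv r ^ m * exp (- 1 / c * wv r)" for r
  define K where "K = max (D powr (-\<alpha>)) (T / g0)"
  define R0 where "R0 = K powr (-1/\<alpha>)"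
  define Q where "Q r = r * (g0 * r powr -\<alpha>)^m * exp (-(g0 * r powr -\<alpha>)/c)" for r
  have K: "K > 0" using D unfolding K_def by (simp add: less_max_iff_disj)
  have R0: "R0 > 0" using K by (simp add: R0_def)
  have Hm[measurable]: "Hh \<in> borel_measurable borel" unfolding Hh_def wv_def Let_def by measurable
  have vf: "vfun \<alpha> T (x, g0) = wv (norm x)" for x by (simp add: vfun_def wv_def)
  have lt: "r powr -\<alpha> > K" if "0 < r" "r < R0" for r
  proof -
    have "R0 powr -\<alpha> < r powr -\<alpha>" using that \<alpha> by (intro powr_less_mono2_neg) auto
    moreover have "R0 powr -\<alpha> = K" using K \<alpha> by (simp add: R0_def powr_powr)
    ultimately show ?thesis by simp
  qed
  have gt: "r powr -\<alpha> < K" if "R0 < r" for r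
  proof -
    have "r powr -\<alpha> < R0 powr -\<alpha>" using that \<alpha> R0 by (intro powr_less_mono2_neg) auto
    moreover have "R0 powr -\<alpha> = K" using K \<alpha> by (simp add: R0_def powr_powr)
    ultimately show ?thesis by simp
  qed
  have R0D: "R0 \<le> D"
  proof -
    have "K powr (-1/\<alpha>) \<le> (D powr -\<alpha>) powr (-1/\<alpha>)"
      using \<alpha> D K by (intro powr_mono2') (auto simp: K_def)
    then show ?thesis using D \<alpha> by (simp add: R0_def powr_powr)
  qed
  have pw: "indicator {0..D} r * (2*r/D\<^sup>2) * Hh r = indicator {0<..<R0} r * (2/D\<^sup>2 * Q r)"
    if "r \<noteq> 0" "r \<noteq> R0" for r
  proof (cases "r < 0")
    case True then show ?thesis by simp
  next
    case False
    then have r: "r > 0" using that by simp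
    show ?thesis
    proof (cases "r < R0")
      case True
      have "g0 * r powr -\<alpha> \<ge> T"
      proof -
        have "T / g0 < r powr -\<alpha>" using lt[OF r True] by (simp add: K_def)
        then show ?thesis using g0 by (simp add: divide_less_eq mult.commute)
      qed
      then have "Hh r = (g0 * r powr -\<alpha>)^m * exp (-(g0 * r powr -\<alpha>)/c)"
        by (simp add: Hh_def wv_def)
      then show ?thesis using True r R0D by (simp add: Q_def indicator_def)
    next
      case False
      then have rR: "R0 < r" using that by simp
      show ?thesis
      proof (cases "r \<le> D")
        case True
        have "D powr -\<alpha> \<le> r powr -\<alpha>" using r True \<alpha> by (intro powr_mono2') auto
        then have "r powr -\<alpha> < T / g0" using gt[OF rR] by (simp add: K_def)
        then have "g0 * r powr -\<alpha> < T" using g0 by (simp add: less_divide_eq mult.commute)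
        then have "Hh r = 0" using m by (simp add: Hh_def wv_def)
        then show ?thesis using rR by simp
      next
        case False then show ?thesis using rR by simp
      qed
    qed
  qed
  have "(\<integral>x. vfun \<alpha> T (x, g0) ^ m * exp (- 1 / c * vfun \<alpha> T (x, g0)) \<partial>disk_unif D)
      = (\<integral>x. Hh (norm x) \<partial>disk_unif D)" by (simp add: vf Hh_def)
  also have "\<dots> = (\<integral>r. Hh r \<partial>distr (disk_unif D) borel norm)"
    by (rule integral_distr[symmetric]) (auto simp: measurable_cong_sets[OF sets_disk refl] Hm)
  also have "\<dots> = (\<integral>r. indicator {0..D} r * (2*r/D\<^sup>2) * Hh r \<partial>lborel)"
    unfolding disk_norm_distr[OF D] by (subst integral_density) (auto simp: Hm indicator_def)
  also have "\<dots> = (\<integral>r. indicator {0<..<R0} r * (2/D\<^sup>2 * Q r) \<partial>lborel)"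
  proof (rule integral_cong_AE)
    show "AE r in lborel. indicator {0..D} r * (2*r/D\<^sup>2) * Hh r = indicator {0<..<R0} r * (2/D\<^sup>2 * Q r)"
      using AE_lborel_singleton[of 0] AE_lborel_singleton[of R0] by eventually_elim (rule pw)
  qed (unfold Q_def, measurable)+
  also have "\<dots> = 2/D\<^sup>2 * (LBINT r:{0<..<R0}. Q r)"
  proof -
    have "(\<lambda>r. indicator {0<..<R0} r * (2/D\<^sup>2 * Q r)) = (\<lambda>r. 2/D\<^sup>2 * (indicator {0<..<R0} r * Q r))"
      by (simp add: mult.left_commute)
    then show ?thesis by (simp only: set_lebesgue_integral_def real_scaleR_def integral_mult_right_zero)
  qed
  also have "(LBINT r:{0<..<R0}. Q r) = (LBINT r=0..ereal R0. Q r)"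
    using R0 by (subst interval_integral_Ioo) (auto simp: zero_ereal_def)
  also have "\<dots> = c powr (real m - 2/\<alpha>) * g0 powr (2/\<alpha>) / \<alpha> * upper_Gamma (real m - 2/\<alpha>) (g0/c*K)"
    unfolding Q_def R0_def by (rule subst_gamma[OF g0 c \<alpha> m K])
  finally show ?thesis by (simp add: K_def)
qed

lemma upper_Gamma_meas[measurable]: "upper_Gamma a \<in> borel_measurable borel"
proof -
  have eq: "upper_Gamma a = (\<lambda>x. \<integral>t. (if x \<le> t then t powr (a - 1) * exp (- t) else 0) \<partial>lborel)"
    unfolding upper_Gamma_def set_lebesgue_integral_def
    by (intro ext Bochner_Integration.integral_cong) (auto simp: indicator_def)
  have "(\<lambda>(x, t). if x \<le> t then t powr (a - 1) * exp (- t) else 0) \<in> borel_measurable (borel \<Otimes>\<^sub>M lborel)"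
    by measurable
  then have "(\<lambda>x. \<integral>t. (if x \<le> t then t powr (a - 1) * exp (- t) else 0) \<partial>lborel) \<in> borel_measurable borel"
    by (rule lborel.borel_measurable_lebesgue_integral[where f="\<lambda>x t. if x \<le> t then t powr (a - 1) * exp (- t) else 0", simplified])
  then show ?thesis unfolding eq .
qed

theorem lemma3:
  fixes lam \<alpha> D T \<theta> \<beta> :: real and m :: nat and f :: "real \<Rightarrow> real" and Gm :: "real measure"
  assumes lam_pos: "lam > 0" and alpha_gt: "\<alpha> > 2" and D_pos: "D > 0" and T_nonneg: "T \<ge> 0"
    and f_meas: "f \<in> borel_measurable lborel" and f_nonneg: "\<And>x. f x \<ge> 0"
    and Gm_def: "Gm = density lborel f"
    and Gm_prob: "prob_space Gm"
    and g_nonneg: "AE g in Gm. g \<ge> 0"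
    and g_mean: "integrable Gm (\<lambda>g. g)" "(\<integral>g. g \<partial>Gm) = 1"
    and g_sq: "integrable Gm (\<lambda>g. g\<^sup>2)"
    and theta_pos: "\<theta> > 0" and beta_pos: "\<beta> > 0" and m_pos: "m \<ge> 1"
  shows "(deriv ^^ m) (\<lambda>s. ln (laplace_P lam \<alpha> D T Gm (- s))) (- 1 / (\<theta> * \<beta>))
         = 2 / \<alpha> * lam * pi * (\<theta> * \<beta>) powr (real m - 2 / \<alpha>)
           * (\<integral>g. g powr (2 / \<alpha>)
                  * upper_Gamma (real m - 2 / \<alpha>) (g / (\<theta> * \<beta>) * max (D powr (- \<alpha>)) (T / g)) \<partial>Gm)"
proof -
  have sGm: "sets Gm = sets borel" using Gm_def by simp
  define c where "c = \<theta> * \<beta>"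
  have c: "c > 0" using theta_pos beta_pos by (simp add: c_def)
  have s0: "- 1 / (\<theta> * \<beta>) < 0" using c by (simp add: c_def)
  define G where "G p = vfun \<alpha> T p ^ m * exp (- 1 / c * vfun \<alpha> T p)" for p
  define \<Gamma>g where "\<Gamma>g g = g powr (2 / \<alpha>) * upper_Gamma (real m - 2 / \<alpha>) (g / c * max (D powr (- \<alpha>)) (T / g))" for g
  have B: "(deriv ^^ m) (\<lambda>s. ln (laplace_P lam \<alpha> D T Gm (- s))) (- 1 / (\<theta> * \<beta>))
     = lam * pi * D\<^sup>2 * (\<integral>p. G p \<partial>(disk_unif D \<Otimes>\<^sub>M Gm))"
    unfolding G_def c_def by (rule stepB[OF lam_pos D_pos T_nonneg s0 m_pos Gm_prob sGm])
  interpret Dk: prob_space "disk_unif D" by (rule prob_disk[OF D_pos])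
  interpret Gp: prob_space Gm by (rule Gm_prob)
  interpret pair_prob_space "disk_unif D" Gm by unfold_locales
  have sets_\<mu>: "sets (disk_unif D \<Otimes>\<^sub>M Gm) = sets (borel \<Otimes>\<^sub>M borel)"
    by (intro sets_pair_measure_cong) (auto simp: sGm)
  have vm[measurable]: "vfun \<alpha> T \<in> borel_measurable (disk_unif D \<Otimes>\<^sub>M Gm)"
    using vfun_meas measurable_cong_sets[OF sets_\<mu> refl] by blast
  have Gbnd: "\<bar>G p\<bar> \<le> fact m / (1/c) ^ m" for p
  proof -
    have v0: "vfun \<alpha> T p \<ge> 0" by (rule vfun_nonneg[OF T_nonneg])
    have "vfun \<alpha> T p ^ m * exp (- (1/c) * vfun \<alpha> T p) \<le> fact m / (1/c) ^ m"
      using c v0 by (intro pow_exp_bound) auto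
    then show ?thesis using v0 by (simp add: G_def)
  qed
  have Gm'[measurable]: "G \<in> borel_measurable (disk_unif D \<Otimes>\<^sub>M Gm)"
    unfolding G_def by measurable
  have Gint: "integrable (disk_unif D \<Otimes>\<^sub>M Gm) G"
    by (rule integrable_const_bound[where B="fact m / (1/c) ^ m"]) (use Gbnd Gm' in auto)
  have Gint': "integrable (disk_unif D \<Otimes>\<^sub>M Gm) (case_prod (\<lambda>x g. G (x, g)))"
    using Gint by simp
  have "(\<integral>p. G p \<partial>(disk_unif D \<Otimes>\<^sub>M Gm)) = (\<integral>g. (\<integral>x. G (x, g) \<partial>disk_unif D) \<partial>Gm)"
    using integral_snd[OF Gint'] by simp
  also have "\<dots> = (\<integral>g. (2 / D\<^sup>2 * c powr (real m - 2/\<alpha>) / \<alpha>) * \<Gamma>g g \<partial>Gm)"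
  proof (rule integral_cong_AE)
    show "AE g in Gm. (\<integral>x. G (x, g) \<partial>disk_unif D) = (2 / D\<^sup>2 * c powr (real m - 2/\<alpha>) / \<alpha>) * \<Gamma>g g"
      using g_nonneg
    proof eventually_elim
      fix g :: real assume g: "0 \<le> g"
      show "(\<integral>x. G (x, g) \<partial>disk_unif D) = (2 / D\<^sup>2 * c powr (real m - 2/\<alpha>) / \<alpha>) * \<Gamma>g g"
        unfolding G_def \<Gamma>g_def by (subst inner_disk[OF D_pos T_nonneg alpha_gt m_pos c g]) simp
    qed
  next
    have "(\<lambda>(g, x). G (x, g)) \<in> borel_measurable (Gm \<Otimes>\<^sub>M disk_unif D)"
      by measurable
    then show "(\<lambda>g. \<integral>x. G (x, g) \<partial>disk_unif D) \<in> borel_measurable Gm"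
      by (rule Dk.borel_measurable_lebesgue_integral[where f="\<lambda>g x. G (x, g)", simplified])
  next
    show "(\<lambda>g. 2 / D\<^sup>2 * c powr (real m - 2/\<alpha>) / \<alpha> * \<Gamma>g g) \<in> borel_measurable Gm"
      unfolding \<Gamma>g_def measurable_cong_sets[OF sGm refl] by measurable
  qed
  also have "\<dots> = (2 / D\<^sup>2 * c powr (real m - 2/\<alpha>) / \<alpha>) * (\<integral>g. \<Gamma>g g \<partial>Gm)"
    by (rule integral_mult_right_zero)
  finally show ?thesis unfolding B using D_pos by (simp add: \<Gamma>g_def c_def field_simps)
qed

end
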